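(* $z_2(4,4)=10$.
   Context: Double Zarankiewicz number: consider configurations $G=([m],[n],E_1\cup E_2)$ where $[m]=\{1,\dots,m\}$, $E_1\subseteq[m]\times[n]$ is a set of 1-edges (cells) and $E_2$ is a set of 2-edges $(i,j;k,l)$ with $i,k\in[m]$, $j,l\in[n]$, $i\ne k$, $j\ne l$; the cells $(i,j)$ and $(k,l)$ are the two halves of this 2-edge. Simplicity condition: the halves of all 2-edges are pairwise distinct cells and none of them belongs to $E_1$. A cell is occupied if it lies in $E_1$ or is a half of some 2-edge. $G$ contains a generalized $C_4$-cycle if (1) there are four 1-edges $(i,j),(i,l),(k,j),(k,l)\in E_1$ with $i\ne k$, $j\ne l$; or (2) there is a 2-edge $(i,j;k,l)\in E_2$ whose two opposite cells $(i,l)$ and $(k,j)$ are both occupied; or (3) there are a 2-edge $(i,j;p,q)\in E_2$ and a cell $(k,l)$ such that the five cells $(k,l),(k,j),(k,q),(i,l),(p,l)$ are pairwise distinct and all occupied. $z_2(m,n)$ is the maximum of $|E_1|+|E_2|$ over all such $G$ satisfying the simplicity condition and containing no generalized $C_4$-cycle. *)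

theory Defs
  imports Main
begin

type_synonym cell = "nat \<times> nat"
type_synonym edge2 = "cell \<times> cell"  (* ((i,j),(k,l)) represents the 2-edge (i,j;k,l) *)

definition wf_config :: "nat \<Rightarrow> nat \<Rightarrow> cell set \<Rightarrow> edge2 set \<Rightarrow> bool" where
  "wf_config m n E1 E2 \<longleftrightarrow>
     E1 \<subseteq> {1..m} \<times> {1..n} \<and>
     (\<forall>((i,j),(k,l)) \<in> E2. i \<in> {1..m} \<and> k \<in> {1..m} \<and> j \<in> {1..n} \<and> l \<in> {1..n}
                            \<and> i \<noteq> k \<and> j \<noteq> l)"

definition halves :: "edge2 \<Rightarrow> cell set" where
  "halves e = {fst e, snd e}"

definition simple_config :: "cell set \<Rightarrow> edge2 set \<Rightarrow> bool" where
  "simple_config E1 E2 \<longleftrightarrow>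
     (\<forall>e\<in>E2. \<forall>e'\<in>E2. e \<noteq> e' \<longrightarrow> halves e \<inter> halves e' = {}) \<and>
     (\<forall>e\<in>E2. halves e \<inter> E1 = {})"

definition occupied :: "cell set \<Rightarrow> edge2 set \<Rightarrow> cell \<Rightarrow> bool" where
  "occupied E1 E2 c \<longleftrightarrow> c \<in> E1 \<or> (\<exists>e\<in>E2. c \<in> halves e)"

definition has_gen_C4 :: "cell set \<Rightarrow> edge2 set \<Rightarrow> bool" where
  "has_gen_C4 E1 E2 \<longleftrightarrow>
     (\<exists>i j k l. i \<noteq> k \<and> j \<noteq> l \<and>
        (i,j) \<in> E1 \<and> (i,l) \<in> E1 \<and> (k,j) \<in> E1 \<and> (k,l) \<in> E1) \<or>
     (\<exists>i j k l. ((i,j),(k,l)) \<in> E2 \<and> occupied E1 E2 (i,l) \<and> occupied E1 E2 (k,j)) \<or>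
     (\<exists>i j p q k l. ((i,j),(p,q)) \<in> E2 \<and>
        distinct [(k,l),(k,j),(k,q),(i,l),(p,l)] \<and>
        (\<forall>c\<in>{(k,l),(k,j),(k,q),(i,l),(p,l)}. occupied E1 E2 c))"

definition z2 :: "nat \<Rightarrow> nat \<Rightarrow> nat" where
  "z2 m n = Max {card E1 + card E2 | E1 E2.
      wf_config m n E1 E2 \<and> simple_config E1 E2 \<and> \<not> has_gen_C4 E1 E2}"

end

theory Submission
  imports Defs
begin

definition noC4 :: "cell set \<Rightarrow> bool" where
  "noC4 E1 \<longleftrightarrow> \<not>(\<exists>i j k l. i \<noteq> k \<and> j \<noteq> l \<and>
        (i,j) \<in> E1 \<and> (i,l) \<in> E1 \<and> (k,j) \<in> E1 \<and> (k,l) \<in> E1)"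

lemma row_pair:
  assumes n: "noC4 E1" and sub: "E1 \<subseteq> {1..4}\<times>{1..4}" and rs: "r \<noteq> s"
  shows "card {c. (r,c)\<in>E1} + card {c. (s,c)\<in>E1} \<le> 5"
proof -
  let ?R = "{c. (r,c)\<in>E1}" and ?S = "{c. (s,c)\<in>E1}"
  have R: "?R \<subseteq> {1..4}" and S: "?S \<subseteq> {1..4}" using sub by auto
  have fR: "finite ?R" and fS: "finite ?S" using R S finite_subset by blast+
  have "card (?R \<inter> ?S) \<le> Suc 0"
    using fR n rs unfolding noC4_def by (subst card_le_Suc0_iff_eq) auto
  moreover have "card (?R \<union> ?S) \<le> 4"
    using R S card_mono[of "{1..4::nat}" "?R \<union> ?S"] by auto
  ultimately show ?thesis using card_Un_Int[OF fR fS] by linarith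
qed

lemma col_pair:
  assumes n: "noC4 E1" and sub: "E1 \<subseteq> {1..4}\<times>{1..4}" and rs: "r \<noteq> s"
  shows "card {c. (c,r)\<in>E1} + card {c. (c,s)\<in>E1} \<le> 5"
proof -
  let ?R = "{c. (c,r)\<in>E1}" and ?S = "{c. (c,s)\<in>E1}"
  have R: "?R \<subseteq> {1..4}" and S: "?S \<subseteq> {1..4}" using sub by auto
  have fR: "finite ?R" and fS: "finite ?S" using R S finite_subset by blast+
  have "card (?R \<inter> ?S) \<le> Suc 0"
    using fR n rs unfolding noC4_def by (subst card_le_Suc0_iff_eq) auto
  moreover have "card (?R \<union> ?S) \<le> 4"
    using R S card_mono[of "{1..4::nat}" "?R \<union> ?S"] by auto
  ultimately show ?thesis using card_Un_Int[OF fR fS] by linarith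
qed

lemma fin_row: "(E1::cell set) \<subseteq> {1..4}\<times>{1..4} \<Longrightarrow> finite {c. (r,c)\<in>E1}"
  by (rule finite_subset[of _ "{1..4::nat}"]) auto
lemma fin_col: "(E1::cell set) \<subseteq> {1..4}\<times>{1..4} \<Longrightarrow> finite {c. (c,r)\<in>E1}"
  by (rule finite_subset[of _ "{1..4::nat}"]) auto

lemma rows_two:
  assumes n: "noC4 E1" and sub: "E1 \<subseteq> {1..4}\<times>{1..4}" and rs: "r \<noteq> s"
  shows "card (E1 \<inter> ({r,s} \<times> UNIV)) \<le> 5"
proof -
  have eq: "E1 \<inter> ({r,s} \<times> UNIV) = ({r} \<times> {c. (r,c)\<in>E1}) \<union> ({s} \<times> {c. (s,c)\<in>E1})" by auto
  have "card (({r} \<times> {c. (r,c)\<in>E1}) \<union> ({s} \<times> {c. (s,c)\<in>E1}))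
      = card ({r} \<times> {c. (r,c)\<in>E1}) + card ({s} \<times> {c. (s,c)\<in>E1})"
    by (rule card_Un_disjoint) (use fin_row[OF sub] rs in auto)
  then show ?thesis using eq row_pair[OF assms] by (simp add: card_cartesian_product_singleton)
qed

lemma cols_two:
  assumes n: "noC4 E1" and sub: "E1 \<subseteq> {1..4}\<times>{1..4}" and rs: "r \<noteq> s"
  shows "card (E1 \<inter> (UNIV \<times> {r,s})) \<le> 5"
proof -
  have eq: "E1 \<inter> (UNIV \<times> {r,s}) = ({c. (c,r)\<in>E1} \<times> {r}) \<union> ({c. (c,s)\<in>E1} \<times> {s})" by auto
  have "card (({c. (c,r)\<in>E1} \<times> {r}) \<union> ({c. (c,s)\<in>E1} \<times> {s}))
      = card ({c. (c,r)\<in>E1} \<times> {r}) + card ({c. (c,s)\<in>E1} \<times> {s})"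
    by (rule card_Un_disjoint) (use fin_col[OF sub] rs in auto)
  then show ?thesis using eq col_pair[OF assms] by (simp add: card_cartesian_product)
qed

lemma arith9:
  fixes a b c d :: nat
  assumes "a+b \<le> 5" "a+c \<le> 5" "a+d \<le> 5" "b+c \<le> 5" "b+d \<le> 5" "c+d \<le> 5"
  shows "a+b+c+d \<le> 9"
proof (cases "3 \<le> a")
  case True then show ?thesis using assms by linarith
next
  case F1: False show ?thesis
  proof (cases "3 \<le> b")
    case True then show ?thesis using assms by linarith
  next
    case F2: False show ?thesis
    proof (cases "3 \<le> c")
      case True then show ?thesis using assms by linarith
    next
      case F3: False show ?thesis
      proof (cases "3 \<le> d")
        case True then show ?thesis using assms by linarith
      next
        case False then show ?thesis using F1 F2 F3 by linarith
      qed
    qed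
  qed
qed

lemma sum14: "(\<Sum>r\<in>{1..4::nat}. f r) = f 1 + f 2 + f 3 + (f 4 :: nat)"
proof -
  have "{1..4::nat} = {1,2,3,4}" by auto
  then show ?thesis by simp
qed

lemma z_bound:
  assumes n: "noC4 E1" and sub: "E1 \<subseteq> {1..4}\<times>{1..4}"
  shows "card E1 \<le> 9"
proof -
  define d where "d r = card {c. (r,c)\<in>E1}" for r
  have eq: "E1 = (SIGMA r:{1..4}. {c. (r,c)\<in>E1})" using sub by blast
  have fin: "\<forall>r\<in>{1..4::nat}. finite {c. (r,c)\<in>E1}"
    using fin_row[OF sub] by blast
  have "card (SIGMA r:{1..4}. {c. (r,c)\<in>E1}) = (\<Sum>r\<in>{1..4}. d r)"
    unfolding d_def by (rule card_SigmaI[OF finite_atLeastAtMost fin])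
  then have "card E1 = (\<Sum>r\<in>{1..4}. d r)" using eq by simp
  also have "\<dots> = d 1 + d 2 + d 3 + d 4" by (rule sum14)
  finally have c: "card E1 = d 1 + d 2 + d 3 + d 4" .
  have p: "\<And>r s. r \<noteq> s \<Longrightarrow> d r + d s \<le> 5" unfolding d_def using row_pair[OF n sub] by blast
  have "d 1 + d 2 \<le> 5" "d 1 + d 3 \<le> 5" "d 1 + d 4 \<le> 5" "d 2 + d 3 \<le> 5" "d 2 + d 4 \<le> 5" "d 3 + d 4 \<le> 5"
    by (rule p; simp)+
  then show ?thesis unfolding c by (rule arith9)
qed

lemma other2:
  fixes i p :: nat
  assumes "i \<in> {1..4}" "p \<in> {1..4}" "i \<noteq> p"
  shows "\<exists>k1 k2. k1 \<in> {1..4} \<and> k2 \<in> {1..4} \<and> distinct [i,p,k1,k2] \<and> {1..4} = {i,p,k1,k2}"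
proof -
  have i: "i = 1 \<or> i = 2 \<or> i = 3 \<or> i = 4" using assms by auto
  have p: "p = 1 \<or> p = 2 \<or> p = 3 \<or> p = 4" using assms by auto
  define k1 where "k1 = (if 1 \<noteq> i \<and> 1 \<noteq> p then 1 else if 2 \<noteq> i \<and> 2 \<noteq> p then 2 else (3::nat))"
  define k2 where "k2 = (if 4 \<noteq> i \<and> 4 \<noteq> p then 4 else if 3 \<noteq> i \<and> 3 \<noteq> p then 3 else (2::nat))"
  have P: "k1 \<in> {1..4} \<and> k2 \<in> {1..4} \<and> distinct [i,p,k1,k2]"
    using i p assms(3) unfolding k1_def k2_def by (elim disjE) simp_all
  have sub: "{i,p,k1,k2} \<subseteq> {1..4}" using P assms by auto
  have "card {i,p,k1,k2} = 4" using distinct_card[of "[i,p,k1,k2]"] P by simp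
  then have "{i,p,k1,k2} = {1..4}" using card_subset_eq[OF _ sub] by simp
  then show ?thesis using P by metis
qed

lemma noC4_of:
  assumes "\<not> has_gen_C4 E1 E2" shows "noC4 E1"
  using assms unfolding has_gen_C4_def noC4_def by blast

lemma wf_E1: "wf_config 4 4 E1 E2 \<Longrightarrow> E1 \<subseteq> {1..4}\<times>{1..4}"
  unfolding wf_config_def by blast

lemma wf_E2: "wf_config 4 4 E1 E2 \<Longrightarrow> ((i,j),(p,q)) \<in> E2 \<Longrightarrow>
   i \<in> {1..4} \<and> p \<in> {1..4} \<and> j \<in> {1..4} \<and> q \<in> {1..4} \<and> i \<noteq> p \<and> j \<noteq> q"
  unfolding wf_config_def by fastforce

lemma wf_E2_sub: "wf_config 4 4 E1 E2 \<Longrightarrow> E2 \<subseteq> ({1..4}\<times>{1..4}) \<times> ({1..4}\<times>{1..4})"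
  using wf_E2 by fastforce

lemma occ_count:
  assumes wf: "wf_config 4 4 E1 E2" and sc: "simple_config E1 E2"
  shows "card {c. occupied E1 E2 c} = card E1 + 2 * card E2"
proof -
  have fE1: "finite E1" using wf_E1[OF wf] finite_subset by blast
  have fE2: "finite E2" using wf_E2_sub[OF wf] finite_subset by blast
  have O: "{c. occupied E1 E2 c} = E1 \<union> (\<Union>e\<in>E2. halves e)"
    unfolding occupied_def by auto
  have h2: "card (halves e) = 2" if "e \<in> E2" for e
  proof -
    obtain i j p q where e: "e = ((i,j),(p,q))" by (metis prod.collapse)
    then have "i \<noteq> p" using wf_E2[OF wf] that by blast
    then show ?thesis unfolding halves_def e by simp
  qed
  have U: "card (\<Union>e\<in>E2. halves e) = (\<Sum>e\<in>E2. card (halves e))"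
    by (rule card_UN_disjoint) (use fE2 sc in \<open>auto simp: simple_config_def halves_def\<close>)
  also have "\<dots> = 2 * card E2" using h2 by simp
  finally have U2: "card (\<Union>e\<in>E2. halves e) = 2 * card E2" .
  have "card (E1 \<union> (\<Union>e\<in>E2. halves e)) = card E1 + card (\<Union>e\<in>E2. halves e)"
    by (rule card_Un_disjoint) (use fE1 fE2 sc in \<open>auto simp: simple_config_def halves_def\<close>)
  then show ?thesis using O U2 by simp
qed

lemma count_helper:
  assumes "finite A" "card A = 8" "X \<subseteq> A" "card X = 5" "X \<inter> E1 = {}" "card (E1 \<inter> B) \<le> 5"
    "E1 \<subseteq> A \<union> B"
  shows "card E1 \<le> 8"
proof -
  have "E1 = (E1 \<inter> A) \<union> (E1 \<inter> B)" using assms by blast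
  then have "card E1 \<le> card (E1 \<inter> A) + card (E1 \<inter> B)" by (metis card_Un_le)
  moreover have "card ((E1 \<inter> A) \<union> X) = card (E1 \<inter> A) + card X"
    by (rule card_Un_disjoint) (use assms finite_subset in auto)
  moreover have "card ((E1 \<inter> A) \<union> X) \<le> card A"
    by (rule card_mono) (use assms in auto)
  ultimately show ?thesis using assms by linarith
qed


lemma holes:
  assumes wf: "wf_config 4 4 E1 E2" and sc: "simple_config E1 E2" and nc: "\<not> has_gen_C4 E1 E2"
    and e: "((i,j),(p,q)) \<in> E2"
  defines "Hs \<equiv> {c \<in> {1..4}\<times>{1..4}. \<not> occupied E1 E2 c}"
  shows "3 \<le> card Hs \<and> (card Hs = 3 \<longrightarrow> card E1 \<le> 8)"
proof -
  note bnd = wf_E2[OF wf e]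
  obtain k1 k2 where k: "k1 \<in> {1..4}" "k2 \<in> {1..4}" "distinct [i,p,k1,k2]" "{1..4} = {i,p,k1,k2}"
    using other2[of i p] bnd by blast
  obtain l1 l2 where l: "l1 \<in> {1..4}" "l2 \<in> {1..4}" "distinct [j,q,l1,l2]" "{1..4} = {j,q,l1,l2}"
    using other2[of j q] bnd by blast
  have E1sub: "E1 \<subseteq> {1..4}\<times>{1..4}" using wf_E1[OF wf] .
  have n4: "noC4 E1" using noC4_of[OF nc] .
  have c2: "\<not> (occupied E1 E2 (i,q) \<and> occupied E1 E2 (p,j))"
    using nc e unfolding has_gen_C4_def by blast
  have c3: "\<not> (occupied E1 E2 (k,l) \<and> occupied E1 E2 (k,j) \<and> occupied E1 E2 (k,q)
      \<and> occupied E1 E2 (i,l) \<and> occupied E1 E2 (p,l))"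
    if "k \<noteq> i" "k \<noteq> p" "l \<noteq> j" "l \<noteq> q" for k l
  proof -
    have "distinct [(k,l),(k,j),(k,q),(i,l),(p,l)]" using that bnd by auto
    then show ?thesis using nc e unfolding has_gen_C4_def by blast
  qed
  have fHs: "finite Hs" unfolding Hs_def by simp
  have inHs: "c \<in> Hs" if "c \<in> {1..4}\<times>{1..4}" "\<not> occupied E1 E2 c" for c
    using that unfolding Hs_def by blast
  obtain z where z: "z \<in> {(i,q),(p,j)}" "\<not> occupied E1 E2 z" using c2 by blast
  have kd: "k1 \<noteq> i" "k1 \<noteq> p" "k2 \<noteq> i" "k2 \<noteq> p" "k1 \<noteq> k2" using k(3) by auto
  have ld: "l1 \<noteq> j" "l1 \<noteq> q" "l2 \<noteq> j" "l2 \<noteq> q" "l1 \<noteq> l2" using l(3) by auto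
  have ipd: "i \<noteq> p" "j \<noteq> q" using bnd by auto
  obtain w1 where w1: "w1 \<in> {(k1,l1),(k1,j),(k1,q),(i,l1),(p,l1)}" "\<not> occupied E1 E2 w1"
    using c3[OF kd(1,2) ld(1,2)] by blast
  obtain w2 where w2: "w2 \<in> {(k2,l2),(k2,j),(k2,q),(i,l2),(p,l2)}" "\<not> occupied E1 E2 w2"
    using c3[OF kd(3,4) ld(3,4)] by blast
  have bb: "i \<in> {1..4}" "p \<in> {1..4}" "j \<in> {1..4}" "q \<in> {1..4}" using bnd by auto
  have zin: "z \<in> Hs" using z bb by (intro inHs) auto
  have w1in: "w1 \<in> Hs" using w1 bb k(1,2) l(1,2) by (intro inHs) auto
  have w2in: "w2 \<in> Hs" using w2 bb k(1,2) l(1,2) by (intro inHs) auto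
  have d3: "distinct [z,w1,w2]" using z(1) w1(1) w2(1) kd ld ipd by auto
  have sub3: "{z,w1,w2} \<subseteq> Hs" using zin w1in w2in by auto
  have c3le: "3 \<le> card Hs"
    using card_mono[OF fHs sub3] distinct_card[OF d3] by simp
  moreover have "card E1 \<le> 8" if H3: "card Hs = 3"
  proof -
    have HsEq: "Hs = {z,w1,w2}"
      using card_subset_eq[OF fHs sub3] distinct_card[OF d3] H3 by simp
    obtain w3 where w3: "w3 \<in> {(k1,l2),(k1,j),(k1,q),(i,l2),(p,l2)}" "\<not> occupied E1 E2 w3"
      using c3[OF kd(1,2) ld(3,4)] by blast
    obtain w4 where w4: "w4 \<in> {(k2,l1),(k2,j),(k2,q),(i,l1),(p,l1)}" "\<not> occupied E1 E2 w4"
      using c3[OF kd(3,4) ld(1,2)] by blast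
    have "w3 \<in> Hs" using w3 bb k(1,2) l(1,2) by (intro inHs) auto
    then have w3': "w3 \<in> {w1,w2}" using HsEq z(1) w3(1) kd ld ipd by auto
    have "w4 \<in> Hs" using w4 bb k(1,2) l(1,2) by (intro inHs) auto
    then have w4': "w4 \<in> {w1,w2}" using HsEq z(1) w4(1) kd ld ipd by auto
    have wtyp: "(w1 \<in> {(k1,j),(k1,q)} \<and> w2 \<in> {(k2,j),(k2,q)}) \<or>
               (w1 \<in> {(i,l1),(p,l1)} \<and> w2 \<in> {(i,l2),(p,l2)})"
      using w1(1) w2(1) w3(1) w4(1) w3' w4' kd ld ipd by auto
    have notE1: "c \<notin> E1" if "\<not> occupied E1 E2 c" for c
      using that unfolding occupied_def by blast
    have hij: "(i,j) \<notin> E1" "(p,q) \<notin> E1"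
      using sc e unfolding simple_config_def halves_def by auto
    from wtyp show ?thesis
    proof
      assume T: "w1 \<in> {(k1,j),(k1,q)} \<and> w2 \<in> {(k2,j),(k2,q)}"
      let ?A = "{1..4::nat} \<times> {j,q}"
      let ?X = "{z,w1,w2,(i,j),(p,q)}"
      have dX: "distinct [z,w1,w2,(i,j),(p,q)]" using T z(1) kd ld ipd by auto
      show ?thesis
      proof (rule count_helper[where A = ?A and X = ?X and B = "UNIV \<times> {l1,l2}"])
        show "card ?A = 8" using l(3) by (simp add: card_cartesian_product)
        show "?X \<subseteq> ?A" using T z(1) k(1,2) bb by auto
        show "card ?X = 5" using distinct_card[OF dX] by simp
        show "?X \<inter> E1 = {}" using notE1 z(2) w1(2) w2(2) hij by auto
        show "card (E1 \<inter> (UNIV \<times> {l1,l2})) \<le> 5" using cols_two[OF n4 E1sub] l(3) by simp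
        show "E1 \<subseteq> ?A \<union> (UNIV \<times> {l1,l2})" using E1sub l(4) by auto
      qed auto
    next
      assume T: "w1 \<in> {(i,l1),(p,l1)} \<and> w2 \<in> {(i,l2),(p,l2)}"
      let ?A = "{i,p} \<times> {1..4::nat}"
      let ?X = "{z,w1,w2,(i,j),(p,q)}"
      have dX: "distinct [z,w1,w2,(i,j),(p,q)]" using T z(1) kd ld ipd by auto
      show ?thesis
      proof (rule count_helper[where A = ?A and X = ?X and B = "{k1,k2} \<times> UNIV"])
        show "card ?A = 8" using k(3) by (simp add: card_cartesian_product)
        show "?X \<subseteq> ?A" using T z(1) l(1,2) bb by auto
        show "card ?X = 5" using distinct_card[OF dX] by simp
        show "?X \<inter> E1 = {}" using notE1 z(2) w1(2) w2(2) hij by auto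
        show "card (E1 \<inter> ({k1,k2} \<times> UNIV)) \<le> 5" using rows_two[OF n4 E1sub] k(3) by simp
        show "E1 \<subseteq> ?A \<union> ({k1,k2} \<times> UNIV)" using E1sub k(4) by auto
      qed auto
    qed
  qed
  ultimately show ?thesis by blast
qed


lemma upper:
  assumes wf: "wf_config 4 4 E1 E2" and sc: "simple_config E1 E2" and nc: "\<not> has_gen_C4 E1 E2"
  shows "card E1 + card E2 \<le> 10"
proof -
  have a9: "card E1 \<le> 9" using z_bound[OF noC4_of[OF nc] wf_E1[OF wf]] .
  show ?thesis
  proof (cases "E2 = {}")
    case True then show ?thesis using a9 by simp
  next
    case False
    then obtain i j p q where e: "((i,j),(p,q)) \<in> E2" by (metis ex_in_conv prod.collapse)
    let ?G = "{1..4::nat}\<times>{1..4::nat}"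
    let ?O = "{c. occupied E1 E2 c}"
    let ?Hs = "{c \<in> ?G. \<not> occupied E1 E2 c}"
    have H: "3 \<le> card ?Hs \<and> (card ?Hs = 3 \<longrightarrow> card E1 \<le> 8)"
      using holes[OF wf sc nc e] by simp
    have OG: "?O \<subseteq> ?G"
      using wf_E1[OF wf] wf_E2_sub[OF wf]
      unfolding occupied_def halves_def by auto
    have "?Hs = ?G - ?O" by auto
    then have "card ?Hs = card ?G - card ?O" using OG by (simp add: card_Diff_subset finite_subset)
    moreover have "card ?G = 16" by (simp add: card_cartesian_product)
    moreover have "card ?O = card E1 + 2 * card E2" using occ_count[OF wf sc] .
    moreover have "card ?O \<le> 16" using card_mono[OF _ OG] by (simp add: card_cartesian_product)
    ultimately have "card ?Hs + card E1 + 2 * card E2 = 16" by linarith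
    then show ?thesis using H a9 by linarith
  qed
qed

definition exE1 :: "cell set" where
  "exE1 = {(1,2),(1,3),(2,3),(2,4),(3,1),(3,2),(3,4),(4,1),(4,3)}"
definition exE2 :: "edge2 set" where
  "exE2 = {((1,1),(2,2))}"

lemma ex_bnd: "(i,j) \<in> exE1 \<Longrightarrow> i \<in> {1,2,3,4} \<and> j \<in> {1,2,3,4}" unfolding exE1_def by auto

lemma ex_d1: "\<not>(\<exists>i j k l. i \<noteq> k \<and> j \<noteq> l \<and>
        (i,j) \<in> exE1 \<and> (i,l) \<in> exE1 \<and> (k,j) \<in> exE1 \<and> (k,l) \<in> exE1)"
proof -
  have "\<forall>i\<in>{1,2,3,4::nat}. \<forall>j\<in>{1,2,3,4::nat}. \<forall>k\<in>{1,2,3,4::nat}. \<forall>l\<in>{1,2,3,4::nat}.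
     \<not>(i \<noteq> k \<and> j \<noteq> l \<and> (i,j) \<in> exE1 \<and> (i,l) \<in> exE1 \<and> (k,j) \<in> exE1 \<and> (k,l) \<in> exE1)"
    unfolding exE1_def by simp
  then show ?thesis using ex_bnd by blast
qed

lemma ex_occ: "occupied exE1 exE2 c \<longleftrightarrow>
   c \<in> {(1,1),(2,2),(1,2),(1,3),(2,3),(2,4),(3,1),(3,2),(3,4),(4,1),(4,3)}"
  unfolding occupied_def exE1_def exE2_def halves_def by auto

lemma ex_obnd: "occupied exE1 exE2 (i,j) \<Longrightarrow> i \<in> {1,2,3,4} \<and> j \<in> {1,2,3,4}"
  unfolding ex_occ by auto

lemma ex_d3: "\<not>(\<exists>i j p q k l. ((i,j),(p,q)) \<in> exE2 \<and>
        distinct [(k,l),(k,j),(k,q),(i,l),(p,l)] \<and>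
        (\<forall>c\<in>{(k,l),(k,j),(k,q),(i,l),(p,l)}. occupied exE1 exE2 c))"
proof -
  have "\<forall>k\<in>{1,2,3,4::nat}. \<forall>l\<in>{1,2,3,4::nat}.
     \<not>(distinct [(k,l),(k,1),(k,2),(1,l),(2::nat,l)] \<and>
        (\<forall>c\<in>{(k,l),(k,1),(k,2),(1,l),(2,l)}. occupied exE1 exE2 c))"
    unfolding ex_occ by simp
  then show ?thesis using ex_obnd unfolding exE2_def by blast
qed

lemma ex_d2: "\<not>(\<exists>i j k l. ((i,j),(k,l)) \<in> exE2 \<and> occupied exE1 exE2 (i,l) \<and> occupied exE1 exE2 (k,j))"
    unfolding ex_occ by (auto simp: exE2_def)

lemma ex_good: "wf_config 4 4 exE1 exE2 \<and> simple_config exE1 exE2 \<and> \<not> has_gen_C4 exE1 exE2"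
proof (intro conjI)
  show "wf_config 4 4 exE1 exE2" unfolding wf_config_def exE1_def exE2_def by auto
  show "simple_config exE1 exE2" unfolding simple_config_def exE1_def exE2_def halves_def by auto
  show "\<not> has_gen_C4 exE1 exE2" using ex_d1 ex_d2 ex_d3 unfolding has_gen_C4_def by blast
qed

theorem theorem3p3:
  shows "z2 4 4 = 10"
proof -
  let ?S = "{card E1 + card E2 | E1 E2.
      wf_config 4 4 E1 E2 \<and> simple_config E1 E2 \<and> \<not> has_gen_C4 E1 E2}"
  have le: "\<And>y. y \<in> ?S \<Longrightarrow> y \<le> 10" using upper by blast
  have fin: "finite ?S" by (rule finite_subset[of _ "{..10}"]) (use le in auto)
  have "card exE1 = 9" unfolding exE1_def by simp
  moreover have "card exE2 = 1" unfolding exE2_def by simp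
  ultimately have "10 \<in> ?S" using ex_good by force
  then show ?thesis unfolding z2_def using Max_eqI[OF fin le] by blast
qed

end
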